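(* Let $F=\sum_{\mathbf i\in I_F}a_{\mathbf i}\mathbf{x}^{\mathbf i}\in K[x_1,\dots,x_n]$ be irreducible and $\mathbf u\in(K^* )^n$. Then $F$ and $D_{\mathbf u}(F)$ are not coprime if and only if $\frac{a_{\mathbf i}\mathbf u^{\mathbf i}}{a_{\mathbf j}\mathbf u^{\mathbf j}}\in\mathbf{k}^*$ for all $\mathbf i,\mathbf j\in I_F$.
   Context: $\mathbf{k}$ is an algebraically closed field of characteristic zero, $K=\mathbf{k}(C)$ the function field of a smooth projective curve $C$ over $\mathbf{k}$. Fix $t\in K\setminus\mathbf{k}$; $\eta'=d\eta/dt$ is the derivation of $K$ extending $d/dt$ on $\mathbf{k}(t)$ (its kernel is $\mathbf{k}$). $I_F$ is the set of exponents $\mathbf i$ with $a_{\mathbf i}\ne0$, $\mathbf x^{\mathbf i}=x_1^{i_1}\cdots x_n^{i_n}$, $\mathbf u^{\mathbf i}=u_1^{i_1}\cdots u_n^{i_n}$, and $D_{\mathbf u}(F)=\sum_{\mathbf i\in I_F}\frac{(a_{\mathbf i}\mathbf{u}^{\mathbf i})'}{\mathbf{u}^{\mathbf i}}\mathbf{x}^{\mathbf i}$. "Not coprime" means having a common nonconstant factor in $K[x_1,\dots,x_n]$ (the zero polynomial is divisible by $F$). *)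

theory Defs
  imports "HOL-Library.Poly_Mapping" "HOL-Computational_Algebra.Polynomial"
    "HOL-Computational_Algebra.Factorial_Ring"
begin

text \<open>Multivariate polynomials in the variables indexed by the finite type 'n with
coefficients in 'a are represented as poly_mappings from exponent vectors
(finitely supported functions 'n to nat) to coefficients. The coefficient a_i of F is lookup F i and
I_F is Poly_Mapping.keys F.\<close>

definition is_derivation :: "('a::field \<Rightarrow> 'a) \<Rightarrow> bool" where
  "is_derivation d \<longleftrightarrow> (\<forall>x y. d (x + y) = d x + d y) \<and> (\<forall>x y. d (x * y) = x * d y + d x * y)"

definition constants_alg_closed :: "('a::field \<Rightarrow> 'a) \<Rightarrow> bool" where
  "constants_alg_closed d \<longleftrightarrow>
     (\<forall>p :: 'a poly. degree p > 0 \<and> (\<forall>i. d (coeff p i) = 0) \<longrightarrow> (\<exists>x. d x = 0 \<and> poly p x = 0))"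

definition monval :: "('n::finite \<Rightarrow> 'a::comm_semiring_1) \<Rightarrow> ('n \<Rightarrow>\<^sub>0 nat) \<Rightarrow> 'a" where
  "monval u m = (\<Prod>j\<in>UNIV. u j ^ Poly_Mapping.lookup m j)"

definition Du :: "('a::field \<Rightarrow> 'a) \<Rightarrow> ('n::finite \<Rightarrow> 'a) \<Rightarrow> (('n \<Rightarrow>\<^sub>0 nat) \<Rightarrow>\<^sub>0 'a) \<Rightarrow> (('n \<Rightarrow>\<^sub>0 nat) \<Rightarrow>\<^sub>0 'a)" where
  "Du d u F = Poly_Mapping.mapp (\<lambda>m a. d (a * monval u m) / monval u m) F"

definition nonconstant :: "(('n \<Rightarrow>\<^sub>0 nat) \<Rightarrow>\<^sub>0 'a::zero) \<Rightarrow> bool" where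
  "nonconstant G \<longleftrightarrow> (\<exists>m \<in> Poly_Mapping.keys G. m \<noteq> 0)"

definition not_coprime :: "(('n \<Rightarrow>\<^sub>0 nat) \<Rightarrow>\<^sub>0 'a::comm_semiring_1) \<Rightarrow> (('n \<Rightarrow>\<^sub>0 nat) \<Rightarrow>\<^sub>0 'a) \<Rightarrow> bool" where
  "not_coprime F G \<longleftrightarrow> (\<exists>H. nonconstant H \<and> H dvd F \<and> H dvd G)"

end

theory Submission imports Defs begin

lemma lookup_mult_unique:
  fixes P Q :: "('m::cancel_comm_monoid_add \<Rightarrow>\<^sub>0 'a::comm_semiring_1)"
  assumes uniq: "\<And>l q. l \<in> Poly_Mapping.keys P \<Longrightarrow> q \<in> Poly_Mapping.keys Q \<Longrightarrow> l + q = a + b \<Longrightarrow> l = a"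
  shows "Poly_Mapping.lookup (P * Q) (a + b) = Poly_Mapping.lookup P a * Poly_Mapping.lookup Q b"
proof -
  have eq: "(\<lambda>l. Poly_Mapping.lookup P l * (\<Sum>q. Poly_Mapping.lookup Q q when a + b = l + q))
        = (\<lambda>l. Poly_Mapping.lookup P a * Poly_Mapping.lookup Q b when l = a)"
  proof
    fix l
    show "Poly_Mapping.lookup P l * (\<Sum>q. Poly_Mapping.lookup Q q when a + b = l + q) = (Poly_Mapping.lookup P a * Poly_Mapping.lookup Q b when l = a)"
    proof (cases "l = a")
      case True
      have "(\<lambda>q. Poly_Mapping.lookup Q q when a + b = a + q) = (\<lambda>q. Poly_Mapping.lookup Q q when q = b)"
        by (auto simp: when_def)
      then show ?thesis using True by simp
    next
      case False
      show ?thesis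
      proof (cases "l \<in> Poly_Mapping.keys P")
        case True
        have z: "\<And>q. (Poly_Mapping.lookup Q q when a + b = l + q) = 0"
          using uniq[OF True] False
          by (case_tac "Poly_Mapping.lookup Q q = 0") (auto simp: when_def in_keys_iff)
        have "(\<Sum>q. Poly_Mapping.lookup Q q when a + b = l + q) = 0"
          unfolding z by simp
        then show ?thesis using False by simp
      next
        case f2: False
        then show ?thesis using False by (simp add: in_keys_iff)
      qed
    qed
  qed
  show ?thesis unfolding lookup_mult eq by simp
qed

lemma ex_max_phi:
  fixes \<phi> :: "'m \<Rightarrow> 'l::linorder"
  assumes "finite S" "S \<noteq> {}"
  shows "\<exists>a\<in>S. \<forall>k\<in>S. \<phi> k \<le> \<phi> a"
proof -
  have "Max (\<phi> ` S) \<in> \<phi> ` S" using assms by simp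
  then obtain a where a: "a \<in> S" "\<phi> a = Max (\<phi> ` S)" by auto
  have "\<forall>k\<in>S. \<phi> k \<le> \<phi> a" using a(2) assms(1) by (simp add: Max_ge)
  then show ?thesis using a(1) by blast
qed

lemma ex_min_phi:
  fixes \<phi> :: "'m \<Rightarrow> 'l::linorder"
  assumes "finite S" "S \<noteq> {}"
  shows "\<exists>a\<in>S. \<forall>k\<in>S. \<phi> a \<le> \<phi> k"
proof -
  have "Min (\<phi> ` S) \<in> \<phi> ` S" using assms by simp
  then obtain a where a: "a \<in> S" "\<phi> a = Min (\<phi> ` S)" by auto
  have "\<forall>k\<in>S. \<phi> a \<le> \<phi> k" using a(2) assms(1) by (simp add: Min_le)
  then show ?thesis using a(1) by blast
qed

lemma ext_max_mult:
  fixes P Q :: "('m::cancel_comm_monoid_add \<Rightarrow>\<^sub>0 'a::idom)"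
    and \<phi> :: "'m \<Rightarrow> 'l::linordered_cancel_ab_semigroup_add"
  assumes inj: "inj \<phi>" and add: "\<And>x y. \<phi> (x + y) = \<phi> x + \<phi> y"
    and P: "P \<noteq> 0" and Q: "Q \<noteq> 0"
  shows "\<exists>a\<in>Poly_Mapping.keys P. \<exists>b\<in>Poly_Mapping.keys Q. (\<forall>k\<in>Poly_Mapping.keys P. \<phi> k \<le> \<phi> a)
     \<and> (\<forall>k\<in>Poly_Mapping.keys Q. \<phi> k \<le> \<phi> b) \<and> a + b \<in> Poly_Mapping.keys (P * Q)"
proof -
  obtain a where a: "a \<in> Poly_Mapping.keys P" "\<forall>k\<in>Poly_Mapping.keys P. \<phi> k \<le> \<phi> a"
    using ex_max_phi[of "Poly_Mapping.keys P" \<phi>] P by auto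
  obtain b where b: "b \<in> Poly_Mapping.keys Q" "\<forall>k\<in>Poly_Mapping.keys Q. \<phi> k \<le> \<phi> b"
    using ex_max_phi[of "Poly_Mapping.keys Q" \<phi>] Q by auto
  have "Poly_Mapping.lookup (P * Q) (a + b) = Poly_Mapping.lookup P a * Poly_Mapping.lookup Q b"
  proof (rule lookup_mult_unique)
    fix l q assume l: "l \<in> Poly_Mapping.keys P" and q: "q \<in> Poly_Mapping.keys Q" and e: "l + q = a + b"
    have "\<phi> l + \<phi> q = \<phi> a + \<phi> b" using e add by metis
    moreover have "\<phi> l \<le> \<phi> a" "\<phi> q \<le> \<phi> b" using a b l q by auto
    ultimately have "\<phi> l = \<phi> a"
      by (metis add_less_le_mono order_le_less order_less_irrefl)
    then show "l = a" using inj by (simp add: inj_eq)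
  qed
  then have "a + b \<in> Poly_Mapping.keys (P * Q)" using a(1) b(1) by (simp add: in_keys_iff)
  then show ?thesis using a b by blast
qed

lemma ext_min_mult:
  fixes P Q :: "('m::cancel_comm_monoid_add \<Rightarrow>\<^sub>0 'a::idom)"
    and \<phi> :: "'m \<Rightarrow> 'l::linordered_cancel_ab_semigroup_add"
  assumes inj: "inj \<phi>" and add: "\<And>x y. \<phi> (x + y) = \<phi> x + \<phi> y"
    and P: "P \<noteq> 0" and Q: "Q \<noteq> 0"
  shows "\<exists>a\<in>Poly_Mapping.keys P. \<exists>b\<in>Poly_Mapping.keys Q. (\<forall>k\<in>Poly_Mapping.keys P. \<phi> a \<le> \<phi> k)
     \<and> (\<forall>k\<in>Poly_Mapping.keys Q. \<phi> b \<le> \<phi> k) \<and> a + b \<in> Poly_Mapping.keys (P * Q)"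
proof -
  obtain a where a: "a \<in> Poly_Mapping.keys P" "\<forall>k\<in>Poly_Mapping.keys P. \<phi> a \<le> \<phi> k"
    using ex_min_phi[of "Poly_Mapping.keys P" \<phi>] P by auto
  obtain b where b: "b \<in> Poly_Mapping.keys Q" "\<forall>k\<in>Poly_Mapping.keys Q. \<phi> b \<le> \<phi> k"
    using ex_min_phi[of "Poly_Mapping.keys Q" \<phi>] Q by auto
  have "Poly_Mapping.lookup (P * Q) (a + b) = Poly_Mapping.lookup P a * Poly_Mapping.lookup Q b"
  proof (rule lookup_mult_unique)
    fix l q assume l: "l \<in> Poly_Mapping.keys P" and q: "q \<in> Poly_Mapping.keys Q" and e: "l + q = a + b"
    have "\<phi> l + \<phi> q = \<phi> a + \<phi> b" using e add by metis
    moreover have "\<phi> a \<le> \<phi> l" "\<phi> b \<le> \<phi> q" using a b l q by auto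
    ultimately have "\<phi> l = \<phi> a"
      by (metis add_less_le_mono order_le_less order_less_irrefl)
    then show "l = a" using inj by (simp add: inj_eq)
  qed
  then have "a + b \<in> Poly_Mapping.keys (P * Q)" using a(1) b(1) by (simp add: in_keys_iff)
  then show ?thesis using a b by blast
qed

definition enumn :: "nat \<Rightarrow> 'n::finite" where
  "enumn = (SOME h. bij_betw h {0..<card (UNIV::'n set)} (UNIV::'n set))"

lemma enumn_bij: "bij_betw (enumn :: nat \<Rightarrow> 'n::finite) {0..<card (UNIV::'n set)} UNIV"
proof -
  obtain h :: "nat \<Rightarrow> 'n" where "bij_betw h {0..<card (UNIV::'n set)} UNIV"
    using ex_bij_betw_nat_finite[of "UNIV::'n set"] by auto
  then show ?thesis unfolding enumn_def
    by (rule someI[of "\<lambda>h. bij_betw h {0..<card (UNIV::'n set)} (UNIV::'n set)"])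
qed

definition emb :: "('n::finite \<Rightarrow>\<^sub>0 nat) \<Rightarrow> (nat \<Rightarrow>\<^sub>0 nat)" where
  "emb m = Abs_poly_mapping (\<lambda>k. if k < card (UNIV::'n set) then Poly_Mapping.lookup m (enumn k) else 0)"

lemma lookup_emb: "Poly_Mapping.lookup (emb (m::'n::finite \<Rightarrow>\<^sub>0 nat)) k
   = (if k < card (UNIV::'n set) then Poly_Mapping.lookup m (enumn k) else 0)"
proof -
  have "finite {k. (if k < card (UNIV::'n set) then Poly_Mapping.lookup m (enumn k) else 0) \<noteq> 0}"
    by (rule finite_subset[of _ "{..<card (UNIV::'n set)}"]) auto
  then show ?thesis unfolding emb_def by simp
qed

lemma emb_add: "emb (x + y) = emb x + emb y"
  by (rule poly_mapping_eqI) (simp add: lookup_emb lookup_add)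

lemma emb_zero: "emb 0 = 0"
  by (rule poly_mapping_eqI) (simp add: lookup_emb)

lemma emb_inj: "inj (emb :: ('n::finite \<Rightarrow>\<^sub>0 nat) \<Rightarrow> _)"
proof (rule injI)
  fix x y :: "'n \<Rightarrow>\<^sub>0 nat" assume e: "emb x = emb y"
  show "x = y"
  proof (rule poly_mapping_eqI)
    fix j :: 'n
    have "j \<in> enumn ` {0..<card (UNIV::'n set)}"
      using enumn_bij[where 'n='n] unfolding bij_betw_def by simp
    then obtain k where k: "k < card (UNIV::'n set)" "enumn k = j" by auto
    have "Poly_Mapping.lookup (emb x) k = Poly_Mapping.lookup (emb y) k" using e by simp
    then show "Poly_Mapping.lookup x j = Poly_Mapping.lookup y j" using k by (simp add: lookup_emb)
  qed
qed

lemma add_eq_0_pm: "(a::'n \<Rightarrow>\<^sub>0 nat) + b = 0 \<Longrightarrow> a = 0"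
proof (rule poly_mapping_eqI)
  fix j assume "a + b = 0"
  then have "Poly_Mapping.lookup (a + b) j = 0" by simp
  then show "Poly_Mapping.lookup a j = Poly_Mapping.lookup 0 j" by (simp add: lookup_add)
qed

lemma unit_keys:
  fixes H G :: "('n::finite \<Rightarrow>\<^sub>0 nat) \<Rightarrow>\<^sub>0 'a::idom"
  assumes "H * G = 1"
  shows "Poly_Mapping.keys H \<subseteq> {0}"
proof
  fix k assume k: "k \<in> Poly_Mapping.keys H"
  have H: "H \<noteq> 0" and G: "G \<noteq> 0" using assms by auto
  obtain a b where a: "a \<in> Poly_Mapping.keys H" "\<forall>k\<in>Poly_Mapping.keys H. emb k \<le> emb a"
    and ab: "a + b \<in> Poly_Mapping.keys (H * G)"
    using ext_max_mult[OF emb_inj emb_add H G] by blast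
  obtain a' b' where a': "a' \<in> Poly_Mapping.keys H" "\<forall>k\<in>Poly_Mapping.keys H. emb a' \<le> emb k"
    and ab': "a' + b' \<in> Poly_Mapping.keys (H * G)"
    using ext_min_mult[OF emb_inj emb_add H G] by blast
  have "a = 0" using ab assms add_eq_0_pm by auto
  moreover have "a' = 0" using ab' assms add_eq_0_pm by auto
  ultimately have "emb k \<le> emb (0::'n \<Rightarrow>\<^sub>0 nat)" "emb (0::'n \<Rightarrow>\<^sub>0 nat) \<le> emb k" using a a' k by auto
  then have "emb k = emb (0::'n \<Rightarrow>\<^sub>0 nat)" by (rule order_antisym)
  then show "k \<in> {0}" using emb_inj[where 'n='n] by (simp add: inj_eq)
qed

lemma quot_keys:
  fixes Q F :: "('n::finite \<Rightarrow>\<^sub>0 nat) \<Rightarrow>\<^sub>0 'a::idom"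
  assumes F: "F \<noteq> 0" and sub: "Poly_Mapping.keys (Q * F) \<subseteq> Poly_Mapping.keys F"
  shows "Poly_Mapping.keys Q \<subseteq> {0}"
proof (cases "Q = 0")
  case True then show ?thesis by simp
next
  case Q: False
  show ?thesis
  proof
    fix k assume k: "k \<in> Poly_Mapping.keys Q"
    obtain a b where a: "a \<in> Poly_Mapping.keys Q" "\<forall>k\<in>Poly_Mapping.keys Q. emb k \<le> emb a"
      and bm: "\<forall>k\<in>Poly_Mapping.keys F. emb k \<le> emb b"
      and ab: "a + b \<in> Poly_Mapping.keys (Q * F)"
      using ext_max_mult[OF emb_inj emb_add Q F] by blast
    obtain a' b' where a': "a' \<in> Poly_Mapping.keys Q" "\<forall>k\<in>Poly_Mapping.keys Q. emb a' \<le> emb k"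
      and bm': "\<forall>k\<in>Poly_Mapping.keys F. emb b' \<le> emb k"
      and ab': "a' + b' \<in> Poly_Mapping.keys (Q * F)"
      using ext_min_mult[OF emb_inj emb_add Q F] by blast
    have "emb (a + b) \<le> emb b" using bm ab sub by auto
    then have "emb a + emb b \<le> 0 + emb b" by (simp add: emb_add)
    then have u: "emb a \<le> 0" by (simp only: add_le_cancel_right)
    have "emb b' \<le> emb (a' + b')" using bm' ab' sub by auto
    then have "0 + emb b' \<le> emb a' + emb b'" by (simp add: emb_add)
    then have l: "0 \<le> emb a'" by (simp only: add_le_cancel_right)
    have "emb k = emb (0::'n \<Rightarrow>\<^sub>0 nat)" using u l a a' k emb_zero by (metis order_antisym order_trans)
    then show "k \<in> {0}" using emb_inj[where 'n='n] by (simp add: inj_eq)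
  qed
qed

lemma const_mult:
  fixes Q F :: "('m::cancel_comm_monoid_add \<Rightarrow>\<^sub>0 'a::comm_semiring_1)"
  assumes "Poly_Mapping.keys Q \<subseteq> {0}"
  shows "Poly_Mapping.lookup (Q * F) m = Poly_Mapping.lookup Q 0 * Poly_Mapping.lookup F m"
proof -
  have eq: "(\<lambda>l. Poly_Mapping.lookup Q l * (\<Sum>q. Poly_Mapping.lookup F q when m = l + q))
        = (\<lambda>l. Poly_Mapping.lookup Q 0 * Poly_Mapping.lookup F m when l = 0)"
  proof
    fix l
    show "Poly_Mapping.lookup Q l * (\<Sum>q. Poly_Mapping.lookup F q when m = l + q)
        = (Poly_Mapping.lookup Q 0 * Poly_Mapping.lookup F m when l = 0)"
    proof (cases "l = 0")
      case True
      have "(\<lambda>q. Poly_Mapping.lookup F q when m = 0 + q) = (\<lambda>q. Poly_Mapping.lookup F q when q = m)"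
        by (auto simp: when_def)
      then show ?thesis using True by simp
    next
      case False
      then have "Poly_Mapping.lookup Q l = 0" using assms by (auto simp: in_keys_iff)
      then show ?thesis using False by simp
    qed
  qed
  show ?thesis unfolding lookup_mult eq by simp
qed

theorem lemma3p3:
  fixes d :: "'a::field_char_0 \<Rightarrow> 'a"
    and F :: "('n::finite \<Rightarrow>\<^sub>0 nat) \<Rightarrow>\<^sub>0 'a"
    and u :: "'n \<Rightarrow> 'a"
  assumes der: "is_derivation d"
    and t_ex: "\<exists>t. d t = 1"
    and kclosed: "constants_alg_closed d"
    and irr: "irreducible F"
    and u_nz: "\<forall>j. u j \<noteq> 0"
  shows "not_coprime F (Du d u F) \<longleftrightarrow>
    (\<forall>i\<in>Poly_Mapping.keys F. \<forall>j\<in>Poly_Mapping.keys F.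
       let r = (Poly_Mapping.lookup F i * monval u i) / (Poly_Mapping.lookup F j * monval u j) in d r = 0 \<and> r \<noteq> 0)"
proof -
  define c where "c m = Poly_Mapping.lookup F m * monval u m" for m
  have dmul: "\<And>x y. d (x * y) = x * d y + d x * y" using der unfolding is_derivation_def by blast
  have mv: "\<And>m. monval u m \<noteq> 0" using u_nz by (simp add: monval_def)
  have c0: "\<And>m. m \<in> Poly_Mapping.keys F \<Longrightarrow> c m \<noteq> 0" using mv by (simp add: c_def in_keys_iff)
  have F0: "F \<noteq> 0" using irr by auto
  have lkDu: "\<And>m. Poly_Mapping.lookup (Du d u F) m
      = (if m \<in> Poly_Mapping.keys F then d (c m) / monval u m else 0)"
    by (simp add: Du_def lookup_mapp when_def c_def)
  have Fnc: "nonconstant F"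
  proof (rule ccontr)
    assume "\<not> nonconstant F"
    then have ks: "Poly_Mapping.keys F \<subseteq> {0}" by (auto simp: nonconstant_def)
    define a where "a = Poly_Mapping.lookup F 0"
    have "a \<noteq> 0"
    proof
      assume "a = 0"
      then have "F = 0" using ks
        by (intro poly_mapping_eqI) (auto simp: a_def in_keys_iff)
      then show False using F0 by simp
    qed
    have "F * Poly_Mapping.single 0 (1 / a) = 1"
    proof (rule poly_mapping_eqI)
      fix m
      have "Poly_Mapping.lookup (F * Poly_Mapping.single 0 (1 / a)) m
          = Poly_Mapping.lookup (Poly_Mapping.single 0 (1 / a) * F) m" by (simp add: mult.commute)
      also have "\<dots> = 1 / a * Poly_Mapping.lookup F m"
        using const_mult[of "Poly_Mapping.single 0 (1 / a)" F m] by simp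
      also have "\<dots> = Poly_Mapping.lookup 1 m"
        using ks \<open>a \<noteq> 0\<close> by (cases "m = 0") (auto simp: a_def in_keys_iff lookup_one)
      finally show "Poly_Mapping.lookup (F * Poly_Mapping.single 0 (1 / a)) m = Poly_Mapping.lookup 1 m" .
    qed
    then have "F dvd 1" by (metis dvdI)
    then show False using irr by (auto simp: irreducible_def)
  qed
  have "not_coprime F (Du d u F) \<longleftrightarrow> F dvd Du d u F"
  proof
    assume "not_coprime F (Du d u F)"
    then obtain H where H: "nonconstant H" "H dvd F" "H dvd Du d u F" by (auto simp: not_coprime_def)
    obtain G where FG: "F = H * G" using H(2) by (auto elim: dvdE)
    have "H dvd 1 \<or> G dvd 1" using irr FG by (auto simp: irreducible_def)
    then show "F dvd Du d u F"
    proof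
      assume "H dvd 1"
      then obtain H' where "1 = H * H'" by (auto elim: dvdE)
      then have "Poly_Mapping.keys H \<subseteq> {0}" using unit_keys by metis
      then show ?thesis using H(1) by (auto simp: nonconstant_def)
    next
      assume "G dvd 1"
      then obtain G' where G': "1 = G * G'" by (auto elim: dvdE)
      have "H = F * G'" using FG G' by (metis mult.assoc mult_1_right)
      then have "F dvd H" by simp
      then show ?thesis using H(3) by (rule dvd_trans)
    qed
  next
    assume "F dvd Du d u F"
    then show "not_coprime F (Du d u F)" using Fnc unfolding not_coprime_def by (blast intro: dvd_refl)
  qed
  also have "\<dots> \<longleftrightarrow> (\<forall>i\<in>Poly_Mapping.keys F. \<forall>j\<in>Poly_Mapping.keys F.
       let r = (Poly_Mapping.lookup F i * monval u i) / (Poly_Mapping.lookup F j * monval u j) in d r = 0 \<and> r \<noteq> 0)" (is "_ \<longleftrightarrow> ?R")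
  proof
    assume "F dvd Du d u F"
    then obtain Q where Q: "Du d u F = F * Q" by (auto elim: dvdE)
    have QF: "Q * F = Du d u F" using Q by (simp only: mult.commute)
    have "Poly_Mapping.keys (Du d u F) \<subseteq> Poly_Mapping.keys F"
      unfolding Du_def by (rule keys_mapp_subset)
    then have "Poly_Mapping.keys (Q * F) \<subseteq> Poly_Mapping.keys F" by (simp only: QF)
    then have kQ: "Poly_Mapping.keys Q \<subseteq> {0}" using quot_keys F0 by blast
    define q0 where "q0 = Poly_Mapping.lookup Q 0"
    have dc: "d (c m) = q0 * c m" if m: "m \<in> Poly_Mapping.keys F" for m
    proof -
      have "d (c m) / monval u m = Poly_Mapping.lookup (Q * F) m"
        using lkDu[of m] m by (simp only: QF if_True)
      also have "\<dots> = q0 * Poly_Mapping.lookup F m" unfolding q0_def by (rule const_mult[OF kQ])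
      finally have "d (c m) = q0 * Poly_Mapping.lookup F m * monval u m"
        using mv[of m] by (simp add: divide_eq_eq)
      then show ?thesis by (simp only: c_def ac_simps)
    qed
    show ?R
    proof (intro ballI)
      fix i j assume i: "i \<in> Poly_Mapping.keys F" and j: "j \<in> Poly_Mapping.keys F"
      define r where "r = c i / c j"
      have r0: "r \<noteq> 0" using c0 i j by (simp add: r_def)
      have ci: "c i = r * c j" using c0[OF j] by (simp add: r_def)
      have e1: "d (c i) = r * d (c j) + d r * c j" unfolding ci by (rule dmul)
      have e2': "q0 * c i = r * (q0 * c j) + d r * c j"
        using e1 unfolding dc[OF i] dc[OF j] .
      have e2: "q0 * (r * c j) = r * (q0 * c j) + d r * c j"
        using e2' unfolding ci .
      have e3: "q0 * (r * c j) = r * (q0 * c j)" by (simp only: ac_simps)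
      have "d r * c j = 0" using e2 e3 by (metis add_cancel_right_right)
      then have "d r = 0" using c0[OF j] by simp
      then show "let r = (Poly_Mapping.lookup F i * monval u i) / (Poly_Mapping.lookup F j * monval u j) in d r = 0 \<and> r \<noteq> 0"
        using r0 by (simp add: r_def c_def Let_def)
    qed
  next
    assume R: ?R
    obtain j where j: "j \<in> Poly_Mapping.keys F" using F0 by fastforce
    define q where "q = d (c j) / c j"
    have "Du d u F = Poly_Mapping.single 0 q * F"
    proof (rule poly_mapping_eqI)
      fix m
      have rhs: "Poly_Mapping.lookup (Poly_Mapping.single 0 q * F) m = q * Poly_Mapping.lookup F m"
        using const_mult[of "Poly_Mapping.single 0 q" F m] by simp
      show "Poly_Mapping.lookup (Du d u F) m = Poly_Mapping.lookup (Poly_Mapping.single 0 q * F) m"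
      proof (cases "m \<in> Poly_Mapping.keys F")
        case False
        then show ?thesis using lkDu[of m] rhs by (simp add: in_keys_iff)
      next
        case True
        define r where "r = c m / c j"
        have dr: "d r = 0" using R True j by (auto simp: r_def c_def Let_def)
        have cm: "c m = r * c j" using c0[OF j] by (simp add: r_def)
        have "d (c m) = r * d (c j) + d r * c j" unfolding cm by (rule dmul)
        then have dcm: "d (c m) = r * d (c j)" using dr by simp
        have "d (c m) / monval u m = (c m / c j) * d (c j) / monval u m" unfolding dcm r_def by simp
        also have "\<dots> = Poly_Mapping.lookup F m * (d (c j) / c j)"
          using c0[OF j] mv[of m] unfolding c_def by (simp add: field_simps)
        finally have "d (c m) / monval u m = q * Poly_Mapping.lookup F m" by (simp add: q_def)
        then show ?thesis using lkDu[of m] rhs True by simp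
      qed
    qed
    then show "F dvd Du d u F" by (metis dvdI mult.commute)
  qed
  finally show ?thesis .
qed

end
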